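(* Let $\epsilon>0$, let $\Delta\mathbf{X}\subset\mathbb{R}^2$ be a $\delta$-location set (finite set of cell coordinates), and let $\mathbf{x}^*\in\Delta\mathbf{X}$. The Planar Isotropic Mechanism (Algorithm 2) with input $(\epsilon,\Delta\mathbf{X},\mathbf{x}^* )$ is $\epsilon$-differentially private on $\Delta\mathbf{X}$: for every output $\mathbf{z}$ and every $\mathbf{x}_1,\mathbf{x}_2\in\Delta\mathbf{X}$, $\Pr(\mathcal{A}(\mathbf{x}_1)=\mathbf{z})\le e^{\epsilon}\Pr(\mathcal{A}(\mathbf{x}_2)=\mathbf{z})$, where $\mathcal{A}(\mathbf{x})$ denotes the output of the mechanism with true location $\mathbf{x}$.
   Context: Planar Isotropic Mechanism with input $(\epsilon,\Delta\mathbf{X},\mathbf{x}^* )$: (1) $K'=\mathrm{Conv}(\Delta\mathbf{X})$ with vertices $\mathbf{v}_1,\dots,\mathbf{v}_h$; (2) $K=\mathrm{Conv}\{\mathbf{v}_i-\mathbf{v}_j:1\le i,j\le h\}$ (the sensitivity hull); (3) sample $\mathbf{y}_1,\dots,\mathbf{y}_l$ independently uniformly from $K$ and set $\mathbf{T}=\big(\frac1l\sum_{i=1}^l\mathbf{y}_i\mathbf{y}_i^T\big)^{-1/2}$ (repeating with larger $l$ until $\mathbf{T}$ is stable); (4) let $K_I=\mathbf{T}K$, sample $\mathbf{z}'$ uniformly from $K_I$ and $r$ from the Gamma distribution with shape $3$ and scale $\epsilon^{-1}$; (5) output $\mathbf{z}=\mathbf{x}^*+r\mathbf{T}^{-1}\mathbf{z}'$.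 $\mathrm{Conv}$ denotes convex hull. A $\delta$-location set is a set of map cells of minimum cardinality whose prior probabilities sum to at least $1-\delta$. *)

theory Defs
  imports "HOL-Probability.Probability"
begin

definition delta_location_set ::
    "(real^2) set \<Rightarrow> (real^2 \<Rightarrow> real) \<Rightarrow> real \<Rightarrow> (real^2) set \<Rightarrow> bool" where
  "delta_location_set cells prior \<delta> DX \<longleftrightarrow>
     DX \<subseteq> cells \<and> (\<Sum>c\<in>DX. prior c) \<ge> 1 - \<delta> \<and>
     (\<forall>S. S \<subseteq> cells \<and> (\<Sum>c\<in>S. prior c) \<ge> 1 - \<delta> \<longrightarrow> card DX \<le> card S)"

definition hull_vertices :: "(real^2) set \<Rightarrow> (real^2) set" where
  "hull_vertices DX = {v. v extreme_point_of (convex hull DX)}"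

definition sensitivity_hull :: "(real^2) set \<Rightarrow> (real^2) set" where
  "sensitivity_hull DX =
     convex hull {v - w | v w. v \<in> hull_vertices DX \<and> w \<in> hull_vertices DX}"

text \<open>Steps (4)-(5): given the (invertible) isotropic transformation T,
  z' is uniform on K_I = T K, r ~ Gamma(shape 3, scale 1/eps) (= Erlang with
  k = 2 and rate eps), and the output is z = x + r T^{-1} z'.\<close>
definition PIM :: "real \<Rightarrow> (real^2) set \<Rightarrow> real^2^2 \<Rightarrow> real^2 \<Rightarrow> (real^2) measure" where
  "PIM \<epsilon> DX T x =
     distr (uniform_measure lborel ((\<lambda>v. T *v v) ` sensitivity_hull DX)
              \<Otimes>\<^sub>M density lborel (\<lambda>r. ennreal (erlang_density 2 \<epsilon> r)))
           borel
           (\<lambda>(z', r). x + r *\<^sub>R (matrix_inv T *v z'))"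

end

theory Submission imports Defs begin
lemma dp_core:
  fixes K :: "(real^2) set" and y d :: "real^2"
  assumes K: "convex K" "closed K" and d: "d \<in> K" and e: "\<epsilon> > 0" and c: "c \<ge> 0"
  shows "(\<integral>\<^sup>+ r. ennreal (c * exp (- \<epsilon> * r)) * indicator {0<..} r * indicator K ((1/r) *\<^sub>R y) \<partial>lborel)
     \<le> ennreal (exp \<epsilon>) * (\<integral>\<^sup>+ r. ennreal (c * exp (- \<epsilon> * r)) * indicator {0<..} r * indicator K ((1/r) *\<^sub>R (y + d)) \<partial>lborel)"
proof -
  have Kb[measurable]: "K \<in> sets borel" using K by simp
  define h where "h r = ennreal (c * exp (- \<epsilon> * r)) * indicator {0<..} r * indicator K ((1/r) *\<^sub>R (y + d))" for r
  have hm[measurable]: "h \<in> borel_measurable borel" unfolding h_def by measurable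
  have "(\<integral>\<^sup>+ r. h r \<partial>lborel) = ennreal \<bar>1::real\<bar> * (\<integral>\<^sup>+ s. h (1 + 1 * s) \<partial>lborel)"
    by (rule nn_integral_real_affine) (auto)
  then have eq: "(\<integral>\<^sup>+ r. h r \<partial>lborel) = (\<integral>\<^sup>+ s. h (1 + s) \<partial>lborel)" by simp
  have "(\<integral>\<^sup>+ r. ennreal (c * exp (- \<epsilon> * r)) * indicator {0<..} r * indicator K ((1/r) *\<^sub>R y) \<partial>lborel)
      \<le> (\<integral>\<^sup>+ s. ennreal (exp \<epsilon>) * h (1 + s) \<partial>lborel)"
  proof (rule nn_integral_mono)
    fix s :: real
    show "ennreal (c * exp (- \<epsilon> * s)) * indicator {0<..} s * indicator K ((1/s) *\<^sub>R y) \<le> ennreal (exp \<epsilon>) * h (1 + s)"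
    proof (cases "s > 0 \<and> (1/s) *\<^sub>R y \<in> K")
      case True
      then have s: "s > 0" and yK: "(1/s) *\<^sub>R y \<in> K" by auto
      have "(1 / (1 + s)) *\<^sub>R (y + d) = (s / (1 + s)) *\<^sub>R ((1/s) *\<^sub>R y) + (1 / (1 + s)) *\<^sub>R d"
        using s by (simp add: scaleR_add_right divide_inverse)
      moreover have "(s / (1 + s)) *\<^sub>R ((1/s) *\<^sub>R y) + (1 / (1 + s)) *\<^sub>R d \<in> K"
        using convexD[OF K(1) yK d, of "s/(1+s)" "1/(1+s)"] s by (simp add: add_divide_distrib[symmetric])
      ultimately have mem: "(1 / (1 + s)) *\<^sub>R (y + d) \<in> K" by simp
      have "ennreal (exp \<epsilon>) * ennreal (c * exp (- \<epsilon> * (1 + s))) = ennreal (c * exp (- \<epsilon> * s))"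
        by (simp add: ennreal_mult'[symmetric] c exp_add[symmetric] algebra_simps)
      then show ?thesis using s yK mem by (simp add: h_def)
    next
      case False
      then show ?thesis by (auto simp: indicator_def)
    qed
  qed
  also have "\<dots> = ennreal (exp \<epsilon>) * (\<integral>\<^sup>+ s. h (1 + s) \<partial>lborel)"
    by (rule nn_integral_cmult) measurable
  finally show ?thesis using eq by (simp add: h_def)
qed

lemma mv_meas[measurable]: "(\<lambda>v. (M::real^'n^'m) *v v) \<in> borel_measurable borel"
  by (intro borel_measurable_continuous_onI linear_continuous_on) (simp add: linear_conv_bounded_linear[symmetric] matrix_vector_mul_linear)

lemma matrix_inv_left: assumes "invertible (T::real^'n^'n)" shows "matrix_inv T ** T = mat 1" "T ** matrix_inv T = mat 1"
proof -
  have "\<exists>A'. T ** A' = mat 1 \<and> A' ** T = mat 1" using assms by (simp add: invertible_def)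
  from someI_ex[OF this] show "matrix_inv T ** T = mat 1" "T ** matrix_inv T = mat 1"
    by (simp_all add: matrix_inv_def)
qed

lemma slice_measure:
  fixes K :: "(real^2) set" and T :: "real^2^2" and x :: "real^2" and A
  assumes K: "compact K" and T: "invertible T" and r: "r > 0" and A[measurable]: "A \<in> sets borel"
  shows "measure lborel {z. (1/r) *\<^sub>R (z - x) \<in> K \<and> z \<in> A}
     = r^2 * \<bar>det (matrix_inv T)\<bar> * measure lborel ((\<lambda>v. T *v v) ` K \<inter> {z'. x + r *\<^sub>R (matrix_inv T *v z') \<in> A})"
proof -
  define Ti where "Ti = matrix_inv T"
  have TiT: "Ti *v (T *v k) = k" for k
    using matrix_inv_left(1)[OF T] by (simp add: Ti_def matrix_vector_mul_assoc)
  define S where "S = (\<lambda>v. T *v v) ` K"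
  have cS: "compact S" unfolding S_def
    by (intro compact_continuous_image K linear_continuous_on) (simp add: linear_conv_bounded_linear[symmetric] matrix_vector_mul_linear)
  have Kb[measurable]: "K \<in> sets borel" using K by (simp add: compact_imp_closed)
  have Sb[measurable]: "S \<in> sets borel" using cS by (simp add: compact_imp_closed)
  define B where "B = S \<inter> {z'. x + r *\<^sub>R (Ti *v z') \<in> A}"
  have Bb: "B \<in> sets borel" unfolding B_def by measurable
  have Bl: "B \<in> lmeasurable"
    by (rule bounded_set_imp_lmeasurable) (use Bb cS compact_imp_bounded in \<open>auto simp: B_def intro: bounded_subset sets_completionI_sets\<close>)
  define L where "L = (\<lambda>v. r *\<^sub>R v) \<circ> (\<lambda>v. Ti *v v)"
  have linL: "linear L" unfolding L_def
    by (intro linear_compose matrix_vector_mul_linear linear_scaleR)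
  have mL: "matrix L = matrix ((*\<^sub>R) r) ** Ti" unfolding L_def
    by (subst matrix_compose) (auto intro: matrix_vector_mul_linear linear_scaleR simp: matrix_of_matrix_vector_mul)
  have dL: "det (matrix L) = r^2 * det Ti"
    by (simp add: mL det_mul)
  define C where "C = {z. (1/r) *\<^sub>R (z - x) \<in> K \<and> z \<in> A}"
  have Cb: "C \<in> sets borel" unfolding C_def by measurable
  have CE: "C = (+) x ` (L ` B)"
  proof safe
    fix z assume "z \<in> C"
    then have k: "(1/r) *\<^sub>R (z - x) \<in> K" and zA: "z \<in> A" by (auto simp: C_def)
    define k where "k = (1/r) *\<^sub>R (z - x)"
    have zk: "z = x + r *\<^sub>R k" using r by (simp add: k_def)
    have "T *v k \<in> B" using k zA TiT r unfolding B_def S_def k_def[symmetric] zk by auto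
    moreover have "z = x + L (T *v k)" using TiT by (simp add: L_def zk)
    ultimately show "z \<in> (+) x ` L ` B" by blast
  next
    fix z' assume "z' \<in> B"
    then obtain k where k: "k \<in> K" "z' = T *v k" and A': "x + r *\<^sub>R (Ti *v z') \<in> A"
      by (auto simp: B_def S_def)
    then show "x + L z' \<in> C" using r TiT by (simp add: C_def L_def)
  qed
  have "measure lebesgue C = measure lebesgue (L ` B)"
    unfolding CE by (rule measure_translation)
  also have "\<dots> = \<bar>det (matrix L)\<bar> * measure lebesgue B"
    by (rule measure_linear_image[OF linL Bl])
  finally have "measure lborel C = \<bar>det (matrix L)\<bar> * measure lborel B"
    using Bb Cb by simp
  then show ?thesis using r by (simp add: C_def B_def S_def Ti_def dL abs_mult)
qed


lemma pim_density:
  fixes K :: "(real^2) set" and T :: "real^2^2" and x :: "real^2" and \<epsilon> :: real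
  assumes K: "compact K" and vK: "measure lborel K > 0" and T: "invertible T" and e: "\<epsilon> > 0"
  shows "distr (uniform_measure lborel ((\<lambda>v. T *v v) ` K)
              \<Otimes>\<^sub>M density lborel (\<lambda>r. ennreal (erlang_density 2 \<epsilon> r)))
           borel (\<lambda>(z', r). x + r *\<^sub>R (matrix_inv T *v z'))
       = density lborel (\<lambda>z. \<integral>\<^sup>+ r. ennreal (\<epsilon>^3 / (2 * measure lborel K) * exp (- \<epsilon> * r))
             * indicator {0<..} r * indicator K ((1/r) *\<^sub>R (z - x)) \<partial>lborel)"
  (is "distr ?M borel ?\<Phi> = density lborel ?F")
proof -
  define Ti where "Ti = matrix_inv T"
  define vk where "vk = measure lborel K"
  define g where "g r = \<epsilon>^3 / (2 * vk) * exp (- \<epsilon> * r)" for r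
  define S where "S = (\<lambda>v. T *v v) ` K"
  have TiT: "Ti ** T = mat 1" using matrix_inv_left(1)[OF T] by (simp add: Ti_def)
  have dT: "\<bar>det Ti\<bar> * \<bar>det T\<bar> = 1"
    using arg_cong[OF TiT, of det] by (simp add: det_mul abs_mult[symmetric])
  have Kb[measurable]: "K \<in> sets borel" using K by (simp add: compact_imp_closed)
  have cS: "compact S" unfolding S_def
    by (intro compact_continuous_image K linear_continuous_on) (simp add: linear_conv_bounded_linear[symmetric] matrix_vector_mul_linear)
  have Sb[measurable]: "S \<in> sets borel" using cS by (simp add: compact_imp_closed)
  have "measure lebesgue S = \<bar>det (matrix ((*v) T))\<bar> * measure lebesgue K"
    unfolding S_def by (rule measure_linear_image) (auto intro: matrix_vector_mul_linear lmeasurable_compact K)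
  then have mS: "measure lborel S = \<bar>det T\<bar> * vk"
    by (simp add: matrix_of_matrix_vector_mul vk_def)
  have dTnz: "det T \<noteq> 0" using dT by auto
  have mSpos: "measure lborel S > 0" using mS vK dTnz by (simp add: vk_def)
  have eS: "emeasure lborel S = ennreal (measure lborel S)"
    using emeasure_bounded_finite[OF compact_imp_bounded[OF cS]] by (simp add: emeasure_eq_ennreal_measure)
  define f where "f z' = indicator S z' / emeasure lborel S" for z'
  have fm[measurable]: "f \<in> borel_measurable borel" unfolding f_def by measurable
  have Mdens: "?M = density lborel (\<lambda>(z', r). f z' * ennreal (erlang_density 2 \<epsilon> r))"
  proof -
    have "?M = density lborel f \<Otimes>\<^sub>M density lborel (\<lambda>r. ennreal (erlang_density 2 \<epsilon> r))"
      by (simp add: uniform_measure_def f_def[abs_def] S_def)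
    also have "\<dots> = density (lborel \<Otimes>\<^sub>M lborel) (\<lambda>(z', r). f z' * ennreal (erlang_density 2 \<epsilon> r))"
      by (rule pair_measure_density) (auto intro: lborel.sigma_finite_measure_axioms prob_space_imp_sigma_finite prob_space_erlang_density e)
    finally show ?thesis by (simp add: lborel_prod)
  qed
  show ?thesis
  proof (rule measure_eqI)
    show "sets (distr ?M borel ?\<Phi>) = sets (density lborel ?F)" by simp
  next
    fix A assume "A \<in> sets (distr ?M borel ?\<Phi>)"
    then have A[measurable]: "A \<in> sets borel" by simp
    have \<Phi>m: "?\<Phi> \<in> borel_measurable (lborel \<Otimes>\<^sub>M lborel)" by measurable
    define H where "H z' r = f z' * ennreal (erlang_density 2 \<epsilon> r) * indicator A (x + r *\<^sub>R (Ti *v z'))" for z' r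
    define Q where "Q z r = ennreal (g r) * indicator {0<..} r * indicator K ((1/r) *\<^sub>R (z - x)) * indicator A z" for z r
    have Hm: "(\<lambda>(z', r). H z' r) \<in> borel_measurable (lborel \<Otimes>\<^sub>M lborel)"
      unfolding H_def by measurable
    have Qm: "(\<lambda>(z, r). Q z r) \<in> borel_measurable (lborel \<Otimes>\<^sub>M lborel)"
      unfolding Q_def g_def by measurable
    have en: "0 \<le> erlang_density 2 \<epsilon> r" for r using e by (auto simp: erlang_density_def)
    have slice: "(\<integral>\<^sup>+ z'. H z' r \<partial>lborel) = (\<integral>\<^sup>+ z. Q z r \<partial>lborel)" for r
    proof (cases "r > 0")
      case False
      then have "erlang_density 2 \<epsilon> r = 0" by (auto simp: erlang_density_def)
      then show ?thesis using False by (simp add: H_def Q_def)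
    next
      case True
      define B where "B = S \<inter> {z'. x + r *\<^sub>R (Ti *v z') \<in> A}"
      define C where "C = {z. (1/r) *\<^sub>R (z - x) \<in> K \<and> z \<in> A}"
      have Bb[measurable]: "B \<in> sets borel" unfolding B_def by measurable
      have Cb[measurable]: "C \<in> sets borel" unfolding C_def by measurable
      have "(\<integral>\<^sup>+ z'. H z' r \<partial>lborel) = (\<integral>\<^sup>+ z'. ennreal (erlang_density 2 \<epsilon> r / measure lborel S) * indicator B z' \<partial>lborel)"
      proof (rule nn_integral_cong)
        fix z'
        have "ennreal (erlang_density 2 \<epsilon> r / measure lborel S) = ennreal (erlang_density 2 \<epsilon> r) / ennreal (measure lborel S)"
          using divide_ennreal[OF en mSpos] by simp
        then show "H z' r = ennreal (erlang_density 2 \<epsilon> r / measure lborel S) * indicator B z'"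
          by (auto simp: H_def f_def B_def eS indicator_def ennreal_divide_times mult.commute)
      qed
      also have "\<dots> = ennreal (erlang_density 2 \<epsilon> r / measure lborel S) * emeasure lborel B"
        by (simp add: nn_integral_cmult_indicator)
      also have "\<dots> = ennreal (erlang_density 2 \<epsilon> r / measure lborel S * measure lborel B)"
      proof -
        have "bounded B" using compact_imp_bounded[OF cS] by (auto simp: B_def intro: bounded_subset)
        then have "emeasure lborel B = ennreal (measure lborel B)"
          using emeasure_bounded_finite[of B] by (simp add: emeasure_eq_ennreal_measure)
        moreover have "0 \<le> erlang_density 2 \<epsilon> r / measure lborel S" using en mSpos by simp
        ultimately show ?thesis by (metis ennreal_mult')
      qed
      also have "\<dots> = ennreal (g r * measure lborel C)"
      proof -
        have sl: "measure lborel C = r^2 * \<bar>det Ti\<bar> * measure lborel B"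
          using slice_measure[OF K T True A, of x] by (simp add: C_def B_def S_def Ti_def)
        have "erlang_density 2 \<epsilon> r = \<epsilon>^3 * r^2 * exp (- \<epsilon> * r) / 2"
          using True by (simp add: erlang_density_def eval_nat_numeral)
        moreover have "\<bar>det Ti\<bar> = 1 / \<bar>det T\<bar>" using dT dTnz by (simp add: field_simps)
        ultimately have "erlang_density 2 \<epsilon> r / measure lborel S * measure lborel B = g r * measure lborel C"
          using vK dTnz by (simp add: sl mS g_def vk_def field_simps power2_eq_square)
        then show ?thesis by simp
      qed
      also have "\<dots> = (\<integral>\<^sup>+ z. ennreal (g r) * indicator C z \<partial>lborel)"
      proof -
        have "bounded C"
        proof -
          have "C \<subseteq> (\<lambda>k. x + r *\<^sub>R k) ` K"
          proof
            fix z assume "z \<in> C"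
            then have "(1/r) *\<^sub>R (z - x) \<in> K" by (simp add: C_def)
            moreover have "z = x + r *\<^sub>R ((1/r) *\<^sub>R (z - x))" using True by simp
            ultimately show "z \<in> (\<lambda>k. x + r *\<^sub>R k) ` K" by blast
          qed
          moreover have "compact ((\<lambda>k. x + r *\<^sub>R k) ` K)"
            by (intro compact_continuous_image K continuous_intros)
          ultimately show ?thesis by (meson bounded_subset compact_imp_bounded)
        qed
        then have "emeasure lborel C = ennreal (measure lborel C)"
          using emeasure_bounded_finite[of C] by (simp add: emeasure_eq_ennreal_measure)
        moreover have "0 \<le> g r" using vK e by (simp add: g_def vk_def)
        ultimately show ?thesis by (simp add: ennreal_mult' nn_integral_cmult_indicator)
      qed
      also have "\<dots> = (\<integral>\<^sup>+ z. Q z r \<partial>lborel)"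
        using True by (intro nn_integral_cong) (auto simp: Q_def C_def indicator_def)
      finally show ?thesis .
    qed
    have "emeasure (distr ?M borel ?\<Phi>) A = emeasure ?M (?\<Phi> -` A \<inter> space ?M)"
      by (rule emeasure_distr) (simp_all add: \<Phi>m measurable_cong_sets[OF sets_pair_measure_cong[OF sets_uniform_measure sets_density] refl])
    also have "\<dots> = (\<integral>\<^sup>+ p. (case p of (z', r) \<Rightarrow> H z' r) \<partial>lborel)"
    proof -
      have Gm: "(\<lambda>(z', r). f z' * ennreal (erlang_density 2 \<epsilon> r)) \<in> borel_measurable (lborel \<Otimes>\<^sub>M lborel)"
        by measurable
      have Pm: "?\<Phi> -` A \<inter> space (lborel \<Otimes>\<^sub>M lborel) \<in> sets (lborel \<Otimes>\<^sub>M lborel)"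
        using measurable_sets[OF \<Phi>m, of A] by simp
      show ?thesis
        unfolding Mdens
        using Gm Pm unfolding lborel_prod
        by (subst emeasure_density) (auto intro!: nn_integral_cong simp: H_def Ti_def indicator_def split: prod.splits)
    qed
    also have "\<dots> = (\<integral>\<^sup>+ z'. \<integral>\<^sup>+ r. H z' r \<partial>lborel \<partial>lborel)"
      using lborel.nn_integral_fst[OF Hm] by (simp add: lborel_prod)
    also have "\<dots> = (\<integral>\<^sup>+ r. \<integral>\<^sup>+ z'. H z' r \<partial>lborel \<partial>lborel)"
      using lborel_pair.Fubini'[OF Hm] by simp
    also have "\<dots> = (\<integral>\<^sup>+ r. \<integral>\<^sup>+ z. Q z r \<partial>lborel \<partial>lborel)"
      by (simp add: slice)
    also have "\<dots> = (\<integral>\<^sup>+ z. \<integral>\<^sup>+ r. Q z r \<partial>lborel \<partial>lborel)"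
      using lborel_pair.Fubini'[OF Qm] by simp
    also have "\<dots> = (\<integral>\<^sup>+ z. ?F z * indicator A z \<partial>lborel)"
    proof (rule nn_integral_cong)
      fix z
      show "(\<integral>\<^sup>+ r. Q z r \<partial>lborel) = ?F z * indicator A z"
        by (subst nn_integral_multc[symmetric]) (auto simp: Q_def[abs_def] g_def vk_def)
    qed
    also have "\<dots> = emeasure (density lborel ?F) A"
      by (subst emeasure_density) auto
    finally show "emeasure (distr ?M borel ?\<Phi>) A = emeasure (density lborel ?F) A" .
  qed
qed


lemma erlang0_integral: assumes e: "\<epsilon> > 0"
  shows "(\<integral>\<^sup>+ r. ennreal (erlang_density 0 \<epsilon> r) \<partial>lborel) = 1"
proof -
  interpret prob_space "density lborel (\<lambda>r. ennreal (erlang_density 0 \<epsilon> r))"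
    by (rule prob_space_erlang_density[OF e])
  have "emeasure (density lborel (\<lambda>r. ennreal (erlang_density 0 \<epsilon> r))) UNIV = 1"
    using emeasure_space_1 by simp
  then show ?thesis by (simp add: emeasure_density)
qed

lemma F_finite:
  fixes K :: "(real^2) set" and y :: "real^2"
  assumes e: "\<epsilon> > 0" and c: "c \<ge> 0" and Kb: "K \<in> sets borel"
  shows "(\<integral>\<^sup>+ r. ennreal (c * exp (- \<epsilon> * r)) * indicator {0<..} r * indicator K ((1/r) *\<^sub>R y) \<partial>lborel) \<le> ennreal (c / \<epsilon>)"
proof -
  have "(\<integral>\<^sup>+ r. ennreal (c * exp (- \<epsilon> * r)) * indicator {0<..} r * indicator K ((1/r) *\<^sub>R y) \<partial>lborel)
      \<le> (\<integral>\<^sup>+ r. ennreal (c / \<epsilon>) * ennreal (erlang_density 0 \<epsilon> r) \<partial>lborel)"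
  proof (rule nn_integral_mono)
    fix r :: real
    show "ennreal (c * exp (- \<epsilon> * r)) * indicator {0<..} r * indicator K ((1/r) *\<^sub>R y) \<le> ennreal (c / \<epsilon>) * ennreal (erlang_density 0 \<epsilon> r)"
    proof (cases "r > 0")
      case True
      have "ennreal (c * exp (- \<epsilon> * r)) = ennreal (c / \<epsilon>) * ennreal (erlang_density 0 \<epsilon> r)"
        using True e c by (simp add: erlang_density_def ennreal_mult'[symmetric])
      then show ?thesis by (auto simp: indicator_def)
    qed auto
  qed
  also have "\<dots> = ennreal (c / \<epsilon>)"
    by (subst nn_integral_cmult) (auto simp: erlang0_integral[OF e])
  finally show ?thesis .
qed

theorem theorem5p3:
  fixes \<epsilon> \<delta> :: real and cells DX :: "(real^2) set" and prior :: "real^2 \<Rightarrow> real"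
    and xstar :: "real^2" and T :: "real^2^2"
  assumes "\<epsilon> > 0"
    and "finite cells"
    and "delta_location_set cells prior \<delta> DX"
    and "xstar \<in> DX"
    and "interior (sensitivity_hull DX) \<noteq> {}"
    and "invertible T"
  shows "\<exists>f :: real^2 \<Rightarrow> real^2 \<Rightarrow> real.
           (\<forall>x\<in>DX. (\<forall>z. f x z \<ge> 0) \<and> f x \<in> borel_measurable borel \<and>
                    PIM \<epsilon> DX T x = density lborel (\<lambda>z. ennreal (f x z))) \<and>
           (\<forall>z. \<forall>x1\<in>DX. \<forall>x2\<in>DX. f x1 z \<le> exp \<epsilon> * f x2 z)"
proof -
  note e = assms(1)
  have fDX: "finite DX" using assms(2,3) by (auto simp: delta_location_set_def intro: finite_subset)
  define V where "V = hull_vertices DX"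
  have VDX: "V \<subseteq> DX" by (auto simp: V_def hull_vertices_def intro: extreme_point_of_convex_hull)
  have fV: "finite V" using VDX fDX by (rule finite_subset)
  define D where "D = {v - w | v w. v \<in> V \<and> w \<in> V}"
  have "D = (\<lambda>(v, w). v - w) ` (V \<times> V)" by (auto simp: D_def)
  then have fD: "finite D" using fV by simp
  define K where "K = sensitivity_hull DX"
  have KD: "K = convex hull D" by (simp add: K_def sensitivity_hull_def D_def V_def)
  have cK: "compact K" unfolding KD using fD by (rule finite_imp_compact_convex_hull)
  have cvK: "convex K" unfolding KD by simp
  have Kb[measurable]: "K \<in> sets borel" using cK by (simp add: compact_imp_closed)
  have vK: "measure lborel K > 0"
  proof -
    obtain a where "a \<in> interior K" using assms(5) K_def by auto
    then obtain d where d: "d > 0" "ball a d \<subseteq> K" using mem_interior by blast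
    have "K \<in> fmeasurable lborel"
      using emeasure_bounded_finite[OF compact_imp_bounded[OF cK]] by (simp add: fmeasurable_def)
    then have "measure lborel (ball a d) \<le> measure lborel K"
      using d by (intro measure_mono_fmeasurable) auto
    moreover have "measure lborel (ball a d) > 0" using content_ball_pos[OF d(1)] by simp
    ultimately show ?thesis by linarith
  qed
  have hullV: "convex hull DX = convex hull V"
    unfolding V_def hull_vertices_def
    by (rule Krein_Milman_Minkowski[OF finite_imp_compact_convex_hull[OF fDX] convex_convex_hull])
  have diff1: "y - w \<in> K" if y: "y \<in> convex hull V" and w: "w \<in> V" for y w
  proof -
    have "(+) (- w) ` V \<subseteq> D" using w by (auto simp: D_def)
    then have "convex hull ((+) (- w) ` V) \<subseteq> K" unfolding KD by (rule hull_mono)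
    then have "(+) (- w) ` (convex hull V) \<subseteq> K" by (simp only: convex_hull_translation)
    then show ?thesis using y by auto
  qed
  have diff: "x1 - x2 \<in> K" if "x1 \<in> DX" "x2 \<in> DX" for x1 x2
  proof -
    have y: "x1 \<in> convex hull V" using that(1) hull_subset[of DX convex] hullV by auto
    have cvx: "convex {w. x1 - w \<in> K}"
    proof (rule convexI)
      fix a b u v :: real and p q assume "p \<in> {w. x1 - w \<in> K}" "q \<in> {w. x1 - w \<in> K}" "0 \<le> u" "0 \<le> v" "u + v = 1"
      then have "u *\<^sub>R (x1 - p) + v *\<^sub>R (x1 - q) \<in> K" using convexD[OF cvK, of "x1 - p" "x1 - q" u v] by simp
      moreover have "u *\<^sub>R (x1 - p) + v *\<^sub>R (x1 - q) = x1 - (u *\<^sub>R p + v *\<^sub>R q)"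
      proof -
        have x1: "x1 = u *\<^sub>R x1 + v *\<^sub>R x1" using \<open>u + v = 1\<close> by (metis scaleR_add_left scaleR_one)
        have "u *\<^sub>R (x1 - p) + v *\<^sub>R (x1 - q) = (u *\<^sub>R x1 + v *\<^sub>R x1) - (u *\<^sub>R p + v *\<^sub>R q)"
          by (simp add: scaleR_diff_right)
        then show ?thesis using x1 by simp
      qed
      ultimately show "u *\<^sub>R p + v *\<^sub>R q \<in> {w. x1 - w \<in> K}" by simp
    qed
    have "V \<subseteq> {w. x1 - w \<in> K}" using diff1[OF y] by auto
    then have "convex hull V \<subseteq> {w. x1 - w \<in> K}" using cvx by (rule hull_minimal)
    moreover have "x2 \<in> convex hull V" using that(2) hull_subset[of DX convex] hullV by auto
    ultimately show ?thesis by auto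
  qed
  define c where "c = \<epsilon>^3 / (2 * measure lborel K)"
  have c0: "c \<ge> 0" using e vK by (simp add: c_def)
  define F where "F x z = (\<integral>\<^sup>+ r. ennreal (c * exp (- \<epsilon> * r)) * indicator {0<..} r * indicator K ((1/r) *\<^sub>R (z - x)) \<partial>lborel)" for x z
  have Ffin: "F x z \<le> ennreal (c / \<epsilon>)" for x z
    unfolding F_def by (rule F_finite[OF e c0 Kb])
  have Fnt: "F x z \<noteq> \<top>" for x z
    using Ffin[of x z] by (auto simp: top_unique)
  define f where "f x z = enn2real (F x z)" for x z
  have Ff: "ennreal (f x z) = F x z" for x z
    using Fnt by (simp add: f_def ennreal_enn2real_if)
  have Fm: "F x \<in> borel_measurable borel" for x
  proof -
    have "(\<lambda>(z, r). ennreal (c * exp (- \<epsilon> * r)) * indicator {0<..} r * indicator K ((1/r) *\<^sub>R (z - x)))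
          \<in> borel_measurable (borel \<Otimes>\<^sub>M lborel)" by measurable
    from lborel.borel_measurable_nn_integral_fst[OF this] show ?thesis
      by (simp add: F_def[abs_def])
  qed
  show ?thesis
  proof (intro exI[of _ f] conjI ballI allI)
    fix x assume "x \<in> DX"
    show "f x z \<ge> 0" for z by (simp add: f_def)
    show "f x \<in> borel_measurable borel" unfolding f_def[abs_def] using Fm[of x] by measurable
    have "PIM \<epsilon> DX T x = density lborel (F x)"
      unfolding PIM_def F_def[abs_def] c_def K_def[symmetric]
      by (rule pim_density[OF cK vK assms(6) e])
    also have "\<dots> = density lborel (\<lambda>z. ennreal (f x z))" by (simp add: Ff)
    finally show "PIM \<epsilon> DX T x = density lborel (\<lambda>z. ennreal (f x z))" .
  next
    fix z x1 x2 assume x1: "x1 \<in> DX" and x2: "x2 \<in> DX"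
    have "F x1 z \<le> ennreal (exp \<epsilon>) * F x2 z"
      using dp_core[OF cvK compact_imp_closed[OF cK] diff[OF x1 x2] e c0, of "z - x1"]
      by (simp add: F_def algebra_simps)
    then have "ennreal (f x1 z) \<le> ennreal (exp \<epsilon> * f x2 z)"
      by (simp add: Ff ennreal_mult')
    then show "f x1 z \<le> exp \<epsilon> * f x2 z"
      by (simp add: f_def)
  qed
qed

end
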